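(* Let $G$ be a connected simple graph on $n\ge2$ vertices labeled so that $m_1+d_1\ge m_2+d_2\ge\cdots\ge m_n+d_n$, where $m_i=\frac{\sum_{j\sim i}d_j}{d_i}$. Let $\Delta$ be the maximum degree and $N=\max_{i\sim j}d_j/d_i$. Then for $1\le i\le n$, \[\rho(Q(G))\le \frac{m_i+d_i+\Delta-N+\sqrt{(m_i+d_i-\Delta+N)^2+4N\sum_{k=1}^{i-1}(m_k+d_k-m_i-d_i)}}{2}.\] Equality holds if and only if $m_1+d_1=\cdots=m_n+d_n$, or $i\ge2$ and $G$ is a bidegreed graph with $m_1+d_1>m_2+d_2=\cdots=m_n+d_n$ and $d_1=n-1>d_2=\cdots=d_n$.
   Context: $Q(G)=D(G)+A(G)$ is the signless Laplacian matrix ($A(G)$ adjacency matrix, $D(G)$ diagonal degree matrix), $d_i$ is the degree of $v_i$, $i\sim j$ means adjacency, $\rho$ is the spectral radius. A bidegreed graph has exactly two distinct vertex degrees. An empty sum equals $0$. *)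

theory Defs
  imports "Jordan_Normal_Form.Spectral_Radius"
begin

definition simple_graph :: "nat \<Rightarrow> (nat \<Rightarrow> nat \<Rightarrow> bool) \<Rightarrow> bool" where
  "simple_graph n E \<longleftrightarrow> (\<forall>i j. E i j \<longrightarrow> i < n \<and> j < n) \<and> (\<forall>i j. E i j \<longrightarrow> E j i) \<and> (\<forall>i. \<not> E i i)"

definition connected_graph :: "nat \<Rightarrow> (nat \<Rightarrow> nat \<Rightarrow> bool) \<Rightarrow> bool" where
  "connected_graph n E \<longleftrightarrow> (\<forall>i j. i < n \<longrightarrow> j < n \<longrightarrow> E\<^sup>*\<^sup>* i j)"

definition deg :: "nat \<Rightarrow> (nat \<Rightarrow> nat \<Rightarrow> bool) \<Rightarrow> nat \<Rightarrow> nat" where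
  "deg n E i = card {j. j < n \<and> E i j}"

definition avg_deg :: "nat \<Rightarrow> (nat \<Rightarrow> nat \<Rightarrow> bool) \<Rightarrow> nat \<Rightarrow> real" where
  "avg_deg n E i = (\<Sum>j\<in>{j. j < n \<and> E i j}. real (deg n E j)) / real (deg n E i)"

definition max_deg :: "nat \<Rightarrow> (nat \<Rightarrow> nat \<Rightarrow> bool) \<Rightarrow> nat" where
  "max_deg n E = Max (deg n E ` {0..<n})"

definition max_ratio :: "nat \<Rightarrow> (nat \<Rightarrow> nat \<Rightarrow> bool) \<Rightarrow> real" where
  "max_ratio n E = Max {real (deg n E j) / real (deg n E i) | i j. i < n \<and> j < n \<and> E i j}"

definition bidegreed :: "nat \<Rightarrow> (nat \<Rightarrow> nat \<Rightarrow> bool) \<Rightarrow> bool" where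
  "bidegreed n E \<longleftrightarrow> card (deg n E ` {0..<n}) = 2"

definition signless_laplacian :: "nat \<Rightarrow> (nat \<Rightarrow> nat \<Rightarrow> bool) \<Rightarrow> real mat" where
  "signless_laplacian n E = mat n n (\<lambda>(i, j). (if i = j then real (deg n E i) else 0) + (if E i j then 1 else 0))"

definition rho_Q :: "nat \<Rightarrow> (nat \<Rightarrow> nat \<Rightarrow> bool) \<Rightarrow> real" where
  "rho_Q n E = spectral_radius (map_mat complex_of_real (signless_laplacian n E))"

end

theory Submission
  imports Defs
begin


definition nbs :: "nat \<Rightarrow> (nat \<Rightarrow> nat \<Rightarrow> bool) \<Rightarrow> nat \<Rightarrow> nat set" where
  "nbs n E p = {j. j < n \<and> E p j}"

lemma Q_carrier: "map_mat complex_of_real (signless_laplacian n E) \<in> carrier_mat n n"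
  by (simp add: signless_laplacian_def)

lemma Q_mult:
  assumes sg: "simple_graph n E" and v: "v \<in> carrier_vec n" and p: "p < n"
  shows "(map_mat complex_of_real (signless_laplacian n E) *\<^sub>v v) $ p
        = complex_of_real (real (deg n E p)) * v $ p + (\<Sum>j\<in>nbs n E p. v $ j)"
proof -
  have nE: "\<not> E p p" using sg unfolding simple_graph_def by auto
  have "(map_mat complex_of_real (signless_laplacian n E) *\<^sub>v v) $ p
     = (\<Sum>j<n. (complex_of_real (if p = j then real (deg n E p) else 0) + complex_of_real (if E p j then 1 else 0)) * v $ j)"
    using p v by (simp add: signless_laplacian_def scalar_prod_def row_def lessThan_atLeast0)
  also have "\<dots> = (\<Sum>j<n. (if p = j then complex_of_real (real (deg n E p)) * v $ j else 0))
                 + (\<Sum>j<n. (if E p j then v $ j else 0))"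
    by (subst sum.distrib[symmetric], rule sum.cong, auto simp: distrib_right)
  also have "\<dots> = complex_of_real (real (deg n E p)) * v $ p + (\<Sum>j\<in>nbs n E p. v $ j)"
    using p by (simp add: sum.If_cases nbs_def lessThan_def Int_def conj_commute)
  finally show ?thesis .
qed

lemma nbs_sub: "simple_graph n E \<Longrightarrow> nbs n E p \<subseteq> {0..<n} - {p}"
  unfolding nbs_def simple_graph_def by auto

lemma finite_nbs[simp]: "finite (nbs n E p)"
  unfolding nbs_def by auto

lemma deg_nbs: "deg n E p = card (nbs n E p)"
  unfolding deg_def nbs_def by simp

lemma eig_bound:
  fixes w :: "nat \<Rightarrow> real"
  assumes sg: "simple_graph n E" and cg: "connected_graph n E"
    and wpos: "\<And>p. p < n \<Longrightarrow> w p > 0"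
    and row: "\<And>p. p < n \<Longrightarrow> real (deg n E p) * w p + (\<Sum>j\<in>nbs n E p. w j) \<le> s * w p"
    and ev: "eigenvalue (map_mat complex_of_real (signless_laplacian n E)) lam"
  shows "cmod lam \<le> s \<and> (cmod lam = s \<longrightarrow> (\<forall>p<n. real (deg n E p) * w p + (\<Sum>j\<in>nbs n E p. w j) = s * w p))"
proof -
  let ?Q = "map_mat complex_of_real (signless_laplacian n E)"
  from ev obtain v where v: "v \<in> carrier_vec n" "v \<noteq> 0\<^sub>v n" "?Q *\<^sub>v v = lam \<cdot>\<^sub>v v"
    unfolding eigenvalue_def eigenvector_def by (auto simp: signless_laplacian_def)
  obtain k0 where k0: "k0 < n" "v $ k0 \<noteq> 0"
    using v(1,2) by (metis carrier_vecD eq_vecI index_zero_vec(1,2))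
  hence n0: "n > 0" by auto
  define c where "c = Max ((\<lambda>k. cmod (v $ k) / w k) ` {0..<n})"
  have cge: "cmod (v $ k) \<le> c * w k" if "k < n" for k
  proof -
    have "cmod (v $ k) / w k \<le> c" unfolding c_def using that by (intro Max_ge) auto
    thus ?thesis using wpos[OF that] by (simp add: divide_le_eq mult.commute)
  qed
  have "c \<in> (\<lambda>k. cmod (v $ k) / w k) ` {0..<n}" unfolding c_def using n0 by (intro Max_in) auto
  then obtain p0 where p0: "p0 < n" "c = cmod (v $ p0) / w p0" by auto
  have cpos: "c > 0"
  proof -
    have "0 < cmod (v $ k0) / w k0" using k0 wpos[OF k0(1)] by auto
    also have "\<dots> \<le> c" unfolding c_def using k0 by (intro Max_ge) auto
    finally show ?thesis .
  qed
  define P where "P = {p. p < n \<and> cmod (v $ p) = c * w p}"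
  have p0P: "p0 \<in> P" unfolding P_def using p0 wpos[OF p0(1)] by auto
  have key: "cmod lam \<le> s \<and> (cmod lam = s \<longrightarrow> (\<forall>j\<in>nbs n E p. j \<in> P)
       \<and> real (deg n E p) * w p + (\<Sum>j\<in>nbs n E p. w j) = s * w p)" if pP: "p \<in> P" for p
  proof -
    have p: "p < n" and vp: "cmod (v $ p) = c * w p" using pP unfolding P_def by auto
    have nbn: "j \<in> nbs n E p \<Longrightarrow> j < n" for j unfolding nbs_def by auto
    have "cmod lam * (c * w p) = cmod (lam * v $ p)" by (simp add: vp norm_mult)
    also have "lam * v $ p = (?Q *\<^sub>v v) $ p" using v(3) p v(1) by simp
    also have "\<dots> = complex_of_real (real (deg n E p)) * v $ p + (\<Sum>j\<in>nbs n E p. v $ j)"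
      by (rule Q_mult[OF sg v(1) p])
    also have "cmod \<dots> \<le> real (deg n E p) * cmod (v $ p) + (\<Sum>j\<in>nbs n E p. cmod (v $ j))"
      by (rule order_trans[OF norm_triangle_ineq], rule add_mono)
         (auto simp: norm_mult intro: norm_sum)
    finally have i1: "cmod lam * (c * w p) \<le> real (deg n E p) * (c * w p) + (\<Sum>j\<in>nbs n E p. cmod (v $ j))"
      by (simp add: vp)
    have i2: "(\<Sum>j\<in>nbs n E p. cmod (v $ j)) \<le> (\<Sum>j\<in>nbs n E p. c * w j)"
      by (rule sum_mono, rule cge, simp add: nbn)
    have i3: "real (deg n E p) * (c * w p) + (\<Sum>j\<in>nbs n E p. c * w j)
          = c * (real (deg n E p) * w p + (\<Sum>j\<in>nbs n E p. w j))"
      by (simp add: sum_distrib_left algebra_simps)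
    have i4: "c * (real (deg n E p) * w p + (\<Sum>j\<in>nbs n E p. w j)) \<le> c * (s * w p)"
      using row[OF p] cpos by simp
    have cw: "c * w p > 0" using cpos wpos[OF p] by simp
    from i1 i2 i3 i4 have "cmod lam * (c * w p) \<le> s * (c * w p)" by (simp add: algebra_simps)
    hence le: "cmod lam \<le> s" using cw by (rule mult_right_le_imp_le)
    moreover have "(\<forall>j\<in>nbs n E p. j \<in> P)
       \<and> real (deg n E p) * w p + (\<Sum>j\<in>nbs n E p. w j) = s * w p" if eq: "cmod lam = s"
    proof -
      have e1: "(\<Sum>j\<in>nbs n E p. cmod (v $ j)) = (\<Sum>j\<in>nbs n E p. c * w j)"
        using i1 i2 i3 i4 eq by (simp add: algebra_simps)
      have "(\<Sum>j\<in>nbs n E p. c * w j - cmod (v $ j)) = 0" using e1 by (simp add: sum_subtractf)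
      hence "\<forall>j\<in>nbs n E p. c * w j - cmod (v $ j) = 0"
        by (subst (asm) sum_nonneg_eq_0_iff) (auto intro: cge nbn simp: cge nbn)
      hence A: "\<forall>j\<in>nbs n E p. j \<in> P" unfolding P_def using nbn by auto
      have "c * (real (deg n E p) * w p + (\<Sum>j\<in>nbs n E p. w j)) = c * (s * w p)"
      proof -
        have "c * (s * w p) \<le> real (deg n E p) * (c * w p) + (\<Sum>j\<in>nbs n E p. c * w j)"
          using i1 i2 eq by (simp add: mult.commute mult.left_commute)
        thus ?thesis using i3 i4 by linarith
      qed
      hence "real (deg n E p) * w p + (\<Sum>j\<in>nbs n E p. w j) = s * w p" using cpos by simp
      with A show ?thesis by simp
    qed
    ultimately show ?thesis by blast
  qed
  have le: "cmod lam \<le> s" using key[OF p0P] by simp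
  moreover have "\<forall>p<n. real (deg n E p) * w p + (\<Sum>j\<in>nbs n E p. w j) = s * w p" if eq: "cmod lam = s"
  proof (intro allI impI)
    fix q assume q: "q < n"
    have "E\<^sup>*\<^sup>* p0 q" using cg p0(1) q unfolding connected_graph_def by auto
    hence "q \<in> P"
    proof (induction rule: rtranclp_induct)
      case base then show ?case by (rule p0P)
    next
      case (step y z)
      have "z < n" using step(2) sg unfolding simple_graph_def by auto
      hence "z \<in> nbs n E y" using step(2) unfolding nbs_def by auto
      thus ?case using key[OF step(3)] eq by auto
    qed
    thus "real (deg n E q) * w q + (\<Sum>j\<in>nbs n E q. w j) = s * w q" using key eq by auto
  qed
  ultimately show ?thesis by blast
qed

lemma eig_exists:
  fixes w :: "nat \<Rightarrow> real"
  assumes sg: "simple_graph n E" and n0: "n > 0"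
    and wpos: "\<And>p. p < n \<Longrightarrow> w p > 0"
    and row: "\<And>p. p < n \<Longrightarrow> real (deg n E p) * w p + (\<Sum>j\<in>nbs n E p. w j) = s * w p"
  shows "s \<le> rho_Q n E"
proof -
  let ?Q = "map_mat complex_of_real (signless_laplacian n E)"
  define v where "v = vec n (\<lambda>k. complex_of_real (w k))"
  have vc: "v \<in> carrier_vec n" unfolding v_def by simp
  have "v \<noteq> 0\<^sub>v n"
  proof
    assume "v = 0\<^sub>v n"
    hence "v $ 0 = 0" using n0 by simp
    thus False using wpos[OF n0] unfolding v_def using n0 by simp
  qed
  moreover have "?Q *\<^sub>v v = complex_of_real s \<cdot>\<^sub>v v"
  proof (rule eq_vecI)
    show "dim_vec (?Q *\<^sub>v v) = dim_vec (complex_of_real s \<cdot>\<^sub>v v)" using vc by (simp add: signless_laplacian_def)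
    fix p assume "p < dim_vec (complex_of_real s \<cdot>\<^sub>v v)"
    hence p: "p < n" using vc by simp
    have "(?Q *\<^sub>v v) $ p = complex_of_real (real (deg n E p) * w p + (\<Sum>j\<in>nbs n E p. w j))"
      unfolding Q_mult[OF sg vc p] using p by (simp add: v_def nbs_def)
    also have "\<dots> = complex_of_real (s * w p)" by (simp add: row[OF p])
    finally show "(?Q *\<^sub>v v) $ p = (complex_of_real s \<cdot>\<^sub>v v) $ p" using p by (simp add: v_def)
  qed
  ultimately have "eigenvalue ?Q (complex_of_real s)"
    unfolding eigenvalue_def eigenvector_def using vc by (auto simp: signless_laplacian_def)
  hence "cmod (complex_of_real s) \<le> rho_Q n E"
    unfolding rho_Q_def by (intro spectral_radius_mem_max(2)[OF Q_carrier n0]) (auto simp: spectrum_def intro!: rev_image_eqI[where x="complex_of_real s"])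
  thus ?thesis by simp
qed

lemma rho_eig:
  assumes n0: "n > 0"
  obtains lam where "eigenvalue (map_mat complex_of_real (signless_laplacian n E)) lam" "rho_Q n E = cmod lam"
  using spectral_radius_mem_max(1)[OF Q_carrier n0, of E] unfolding rho_Q_def spectrum_def by auto


lemma deg_pos:
  assumes sg: "simple_graph n E" and cg: "connected_graph n E" and n2: "n \<ge> 2" and p: "p < n"
  shows "deg n E p \<ge> 1"
proof -
  define q where "q = (if p = 0 then 1 else 0::nat)"
  have q: "q < n" "q \<noteq> p" unfolding q_def using n2 p by auto
  have "E\<^sup>*\<^sup>* p q" using cg p q unfolding connected_graph_def by auto
  then obtain r where "E p r" using q(2) by (metis converse_rtranclpE)
  hence "r \<in> nbs n E p" using sg unfolding simple_graph_def nbs_def by auto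
  hence "card (nbs n E p) > 0" by (auto simp: card_gt_0_iff)
  thus ?thesis by (simp add: deg_nbs)
qed

lemma deg_le:
  assumes sg: "simple_graph n E" and p: "p < n"
  shows "deg n E p \<le> n - 1"
proof -
  have "card (nbs n E p) \<le> card ({0..<n} - {p})" by (rule card_mono[OF _ nbs_sub[OF sg]]) auto
  thus ?thesis using p by (simp add: deg_nbs)
qed

lemma max_deg_props:
  assumes n0: "n > 0"
  shows "\<And>p. p < n \<Longrightarrow> deg n E p \<le> max_deg n E" "\<exists>v<n. max_deg n E = deg n E v"
proof -
  show "\<And>p. p < n \<Longrightarrow> deg n E p \<le> max_deg n E" unfolding max_deg_def by (intro Max_ge) auto
  have "max_deg n E \<in> deg n E ` {0..<n}" unfolding max_deg_def using n0 by (intro Max_in) auto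
  thus "\<exists>v<n. max_deg n E = deg n E v" by auto
qed

lemma max_ratio_props:
  assumes sg: "simple_graph n E" and cg: "connected_graph n E" and n2: "n \<ge> 2"
  shows "\<And>p j. p < n \<Longrightarrow> j < n \<Longrightarrow> E p j \<Longrightarrow> real (deg n E j) / real (deg n E p) \<le> max_ratio n E"
    "\<exists>p j. p < n \<and> j < n \<and> E p j \<and> max_ratio n E = real (deg n E j) / real (deg n E p)"
proof -
  let ?S = "{real (deg n E j) / real (deg n E i) | i j. i < n \<and> j < n \<and> E i j}"
  have fin: "finite ?S"
  proof -
    have "?S \<subseteq> (\<lambda>(i,j). real (deg n E j) / real (deg n E i)) ` ({0..<n} \<times> {0..<n})" by auto
    thus ?thesis by (rule finite_subset) auto
  qed
  show "\<And>p j. p < n \<Longrightarrow> j < n \<Longrightarrow> E p j \<Longrightarrow> real (deg n E j) / real (deg n E p) \<le> max_ratio n E"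
    unfolding max_ratio_def by (rule Max_ge[OF fin]) auto
  have "deg n E 0 \<ge> 1" using deg_pos[OF sg cg n2] n2 by auto
  hence "nbs n E 0 \<noteq> {}" by (auto simp: deg_nbs)
  then obtain j where "j < n" "E 0 j" unfolding nbs_def by auto
  hence "real (deg n E j) / real (deg n E 0) \<in> ?S" using n2 by force
  hence ne: "?S \<noteq> {}" by blast
  have "max_ratio n E \<in> ?S" unfolding max_ratio_def by (rule Max_in[OF fin ne])
  thus "\<exists>p j. p < n \<and> j < n \<and> E p j \<and> max_ratio n E = real (deg n E j) / real (deg n E p)" by auto
qed

lemma avg_deg_mult:
  assumes "deg n E p \<ge> 1"
  shows "real (deg n E p) * avg_deg n E p = (\<Sum>j\<in>nbs n E p. real (deg n E j))"
  using assms unfolding avg_deg_def nbs_def by simp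

lemma avg_deg_nonneg: "avg_deg n E p \<ge> 0"
  unfolding avg_deg_def by (intro divide_nonneg_nonneg sum_nonneg) auto

lemma regular_case:
  assumes sg: "simple_graph n E" and cg: "connected_graph n E" and n2: "n \<ge> 2"
    and N1: "max_ratio n E \<le> 1"
  shows "\<forall>k<n. avg_deg n E k + real (deg n E k) = avg_deg n E 0 + real (deg n E 0)"
proof -
  have dpos: "real (deg n E p) > 0" if "p < n" for p using deg_pos[OF sg cg n2 that] by simp
  have edge: "deg n E j = deg n E p" if "p < n" "j < n" "E p j" for p j
  proof -
    have sym: "E j p" using that sg unfolding simple_graph_def by auto
    have "real (deg n E j) / real (deg n E p) \<le> 1" using max_ratio_props(1)[OF sg cg n2 that] N1 by simp
    hence a: "real (deg n E j) \<le> real (deg n E p)" using dpos[OF that(1)] divide_le_eq_1_pos by blast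
    have "real (deg n E p) / real (deg n E j) \<le> 1"
      using max_ratio_props(1)[OF sg cg n2 that(2,1) sym] N1 by simp
    hence "real (deg n E p) \<le> real (deg n E j)" using dpos[OF that(2)] divide_le_eq_1_pos by blast
    with a show ?thesis by simp
  qed
  have alld: "deg n E k = deg n E 0" if k: "k < n" for k
  proof -
    have "E\<^sup>*\<^sup>* 0 k" using cg k unfolding connected_graph_def by auto
    thus ?thesis
    proof (induction rule: rtranclp_induct)
      case base then show ?case by simp
    next
      case (step y z)
      have "y < n" "z < n" using step(2) sg unfolding simple_graph_def by auto
      thus ?case using edge[OF _ _ step(2)] step(3) by simp
    qed
  qed
  have m: "avg_deg n E k = real (deg n E 0)" if k: "k < n" for k
  proof -
    have "(\<Sum>j\<in>nbs n E k. real (deg n E j)) = (\<Sum>j\<in>nbs n E k. real (deg n E 0))"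
    proof (rule sum.cong)
      fix j assume "j \<in> nbs n E k"
      hence "j < n" unfolding nbs_def by simp
      from alld[OF this] show "real (deg n E j) = real (deg n E 0)" by simp
    qed simp
    also have "\<dots> = real (deg n E k) * real (deg n E 0)" by (simp add: deg_nbs)
    finally have "real (deg n E k) * avg_deg n E k = real (deg n E k) * real (deg n E 0)"
      using avg_deg_mult[OF deg_pos[OF sg cg n2 k]] by simp
    thus ?thesis using dpos[OF k] by simp
  qed
  have n0: "0 < n" using n2 by simp
  show ?thesis
  proof (intro allI impI)
    fix k assume k: "k < n"
    show "avg_deg n E k + real (deg n E k) = avg_deg n E 0 + real (deg n E 0)"
      using m[OF k] m[OF n0] alld[OF k] by simp
  qed
qed



lemma ident_alg:
  fixes dd s ti N yp A B tp g ep mm D C :: real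
  assumes "dd > 0" "s - ti = N*(yp + A + B)" "tp = ti + g*yp + ep" "tp = mm + dd" "g = s - D + N"
  shows "s*(dd*(1+yp)) - (dd*(dd*(1+yp)) + (dd*mm + C)) = dd*((D - dd)*yp - ep + N*A + (N*B - C/dd))"
proof -
  have c: "dd * (C/dd) = C" using assms(1) by simp
  have m: "mm = ti + g*yp + ep - dd" using assms(3,4) by simp
  have s: "s = ti + N*(yp + A + B)" using assms(2) by simp
  have g: "g = ti + N*(yp + A + B) - D + N" using assms(5) s by simp
  show ?thesis unfolding m g s using c by (simp add: algebra_simps)
qed

theorem corollary5:
  fixes n :: nat and E :: "nat \<Rightarrow> nat \<Rightarrow> bool" and i :: nat
  defines "d \<equiv> (\<lambda>k. real (deg n E k))"
      and "m \<equiv> avg_deg n E"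
      and "\<Delta> \<equiv> real (max_deg n E)"
      and "N \<equiv> max_ratio n E"
  assumes "n \<ge> 2"
      and "simple_graph n E"
      and "connected_graph n E"
      and order: "\<And>k l. k \<le> l \<Longrightarrow> l < n \<Longrightarrow> m l + d l \<le> m k + d k"
      and "i < n"
  shows "rho_Q n E \<le> (m i + d i + \<Delta> - N
            + sqrt ((m i + d i - \<Delta> + N)\<^sup>2 + 4 * N * (\<Sum>k<i. m k + d k - m i - d i))) / 2
    \<and> (rho_Q n E = (m i + d i + \<Delta> - N
            + sqrt ((m i + d i - \<Delta> + N)\<^sup>2 + 4 * N * (\<Sum>k<i. m k + d k - m i - d i))) / 2
         \<longleftrightarrow> (\<forall>k<n. m k + d k = m 0 + d 0)
           \<or> (i \<ge> 1 \<and> bidegreed n E \<and> m 0 + d 0 > m 1 + d 1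
              \<and> (\<forall>k. 1 \<le> k \<and> k < n \<longrightarrow> m k + d k = m 1 + d 1)
              \<and> d 0 = real n - 1 \<and> d 0 > d 1 \<and> (\<forall>k. 1 \<le> k \<and> k < n \<longrightarrow> d k = d 1)))"
proof -
  note n2 = assms(5) and sg = assms(6) and cg = assms(7) and iln = assms(9)
  define t where "t k = m k + d k" for k
  define S where "S = (\<Sum>k<i. m k + d k - m i - d i)"
  define s where "s = (m i + d i + \<Delta> - N + sqrt ((m i + d i - \<Delta> + N)\<^sup>2 + 4 * N * S)) / 2"
  have n0: "n > 0" using n2 by simp
  have dpos: "d p > 0" if "p < n" for p using deg_pos[OF sg cg n2 that] unfolding d_def by simp
  have dle: "d p \<le> real n - 1" if "p < n" for p
  proof -
    have "deg n E p \<le> n - 1" by (rule deg_le[OF sg that])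
    hence "real (deg n E p) \<le> real (n - 1)" by linarith
    thus ?thesis unfolding d_def using n0 by (simp add: of_nat_diff)
  qed
  have Dge: "d p \<le> \<Delta>" if "p < n" for p using max_deg_props(1)[OF n0 that] unfolding d_def \<Delta>_def by simp
  obtain v where v: "v < n" "\<Delta> = d v" using max_deg_props(2)[OF n0, of E] unfolding d_def \<Delta>_def by auto
  have Nge: "d j / d p \<le> N" if "p < n" "j < n" "E p j" for p j
    using max_ratio_props(1)[OF sg cg n2 that] unfolding d_def N_def by simp
  obtain pa pb where pab: "pa < n" "pb < n" "E pa pb" "N = d pb / d pa"
    using max_ratio_props(2)[OF sg cg n2] unfolding d_def N_def by auto
  have Npos: "N > 0" using pab dpos by simp
  have mnn: "m p \<ge> 0" for p unfolding m_def by (rule avg_deg_nonneg)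
  have msum: "d p * m p = (\<Sum>j\<in>nbs n E p. d j)" if "p < n" for p
    using avg_deg_mult[OF deg_pos[OF sg cg n2 that]] unfolding d_def m_def by simp
  have tord: "t l \<le> t k" if "k \<le> l" "l < n" for k l using order[OF that] unfolding t_def .
  have S2: "S = (\<Sum>k<i. t k - t i)" unfolding S_def t_def by (simp add: diff_diff_eq)
  have tki: "t i \<le> t k" if "k < i" for k using tord[of k i] that iln by simp
  have Snn: "S \<ge> 0" unfolding S2 by (rule sum_nonneg) (simp add: tki)
  have t0D: "t 0 \<ge> \<Delta>"
  proof -
    have "t v \<ge> \<Delta>" unfolding t_def using v mnn[of v] by simp
    thus ?thesis using tord[of 0 v] v by simp
  qed
  have regular: "\<forall>k<n. t k = t 0" if "N \<le> 1"
  proof -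
    have "max_ratio n E \<le> 1" using that unfolding N_def .
    from regular_case[OF sg cg n2 this] show ?thesis unfolding t_def m_def d_def by blast
  qed
  define a where "a = t i - \<Delta> + N"
  define r where "r = sqrt (a\<^sup>2 + 4 * N * S)"
  have s_eq: "s = (t i + \<Delta> - N + r) / 2" unfolding s_def r_def a_def t_def by simp
  have rad: "a\<^sup>2 + 4 * N * S \<ge> 0" using Snn Npos by (intro add_nonneg_nonneg) auto
  have r2: "r\<^sup>2 = a\<^sup>2 + 4 * N * S" unfolding r_def using rad by simp
  have rnn: "r \<ge> 0" unfolding r_def using rad by simp
  have rabs: "\<bar>a\<bar> \<le> r"
  proof -
    have "sqrt (a\<^sup>2) \<le> r" unfolding r_def using Snn Npos by (intro real_sqrt_le_mono) simp
    thus ?thesis by simp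
  qed
  define g where "g = s - \<Delta> + N"
  have g_eq: "g = (a + r) / 2" unfolding g_def s_eq a_def by (simp add: field_simps)
  have gpos: "g > 0"
  proof (cases "S = 0")
    case True
    have all0: "\<forall>k\<in>{..<i}. t k - t i = 0"
      using True unfolding S2 by (subst (asm) sum_nonneg_eq_0_iff) (use tord iln in auto)
    have "t 0 = t i"
    proof (cases "i = 0")
      case False thus ?thesis using all0 by auto
    qed simp
    hence "a > 0" unfolding a_def using t0D Npos by simp
    thus ?thesis unfolding g_eq using rabs by simp
  next
    case False
    hence "S > 0" using Snn by simp
    hence "\<bar>a\<bar>\<^sup>2 < r\<^sup>2" unfolding r2 using Npos by simp
    hence "\<bar>a\<bar> < r" using rnn by (rule power2_less_imp_less)
    thus ?thesis unfolding g_eq by simp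
  qed
  have quad: "(s - t i) * g = N * S"
  proof -
    have "(s - t i) * g = (r - a) * (r + a) / 4" unfolding g_eq s_eq a_def by (simp add: field_simps)
    also have "\<dots> = (r\<^sup>2 - a\<^sup>2) / 4" by (simp add: power2_eq_square algebra_simps)
    finally show ?thesis unfolding r2 by simp
  qed
  define y where "y k = (if k < i then (t k - t i) / g else 0)" for k
  define e where "e k = (if k < i then 0 else t k - t i)" for k
  have ynn: "y k \<ge> 0" for k unfolding y_def using tki[of k] gpos by auto
  have te: "t p = t i + g * y p + e p" for p unfolding y_def e_def using gpos by auto
  have enp: "e p \<le> 0" if "p < n" for p unfolding e_def using tord[of i p] that by auto
  have Ysum: "(\<Sum>j<n. y j) = S / g"
  proof -
    have "(\<Sum>j<n. y j) = (\<Sum>j<i. y j)"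
      by (rule sum.mono_neutral_right) (use iln in \<open>auto simp: y_def\<close>)
    also have "\<dots> = (\<Sum>j<i. (t j - t i) / g)" by (rule sum.cong) (auto simp: y_def)
    also have "\<dots> = S / g" unfolding S2 by (simp add: sum_divide_distrib)
    finally show ?thesis .
  qed
  have sY: "s - t i = N * (\<Sum>j<n. y j)" unfolding Ysum using quad gpos by (simp add: field_simps)
  define w where "w k = d k * (1 + y k)" for k
  have wpos: "w p > 0" if "p < n" for p unfolding w_def using dpos[OF that] ynn[of p]
    by (simp add: add_pos_nonneg)
  define Os where "Os p = {j. j < n \<and> j \<noteq> p \<and> \<not> E p j}" for p
  define slack where "slack p = (\<Delta> - d p) * y p - e p + (\<Sum>j\<in>Os p. N * y j)
        + (\<Sum>j\<in>nbs n E p. (N - d j / d p) * y j)" for p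
  have split: "(\<Sum>j<n. y j) = y p + (\<Sum>j\<in>Os p. y j) + (\<Sum>j\<in>nbs n E p. y j)" if p: "p < n" for p
  proof -
    have nE: "\<not> E p p" using sg unfolding simple_graph_def by auto
    have eq: "{..<n} = insert p (Os p \<union> nbs n E p)" using p nE unfolding Os_def nbs_def by auto
    have fin: "finite (Os p)" "finite (nbs n E p)" unfolding Os_def by auto
    have dis: "Os p \<inter> nbs n E p = {}" unfolding Os_def nbs_def by auto
    have np: "p \<notin> Os p \<union> nbs n E p" using nE unfolding Os_def nbs_def by auto
    show ?thesis unfolding eq using fin dis np by (simp add: sum.union_disjoint)
  qed
  have ident: "s * w p - (d p * w p + (\<Sum>j\<in>nbs n E p. w j)) = d p * slack p" if p: "p < n" for p
  proof -
    have dp: "d p > 0" by (rule dpos[OF p])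
    have "(\<Sum>j\<in>nbs n E p. w j) = (\<Sum>j\<in>nbs n E p. d j) + (\<Sum>j\<in>nbs n E p. d j * y j)"
      unfolding w_def by (simp add: sum.distrib algebra_simps)
    also have "(\<Sum>j\<in>nbs n E p. d j) = d p * m p" by (rule msum[OF p, symmetric])
    finally have R: "(\<Sum>j\<in>nbs n E p. w j) = d p * m p + (\<Sum>j\<in>nbs n E p. d j * y j)" .
    have C: "(\<Sum>j\<in>nbs n E p. (N - d j / d p) * y j)
        = N * (\<Sum>j\<in>nbs n E p. y j) - (\<Sum>j\<in>nbs n E p. d j * y j) / d p"
      by (simp add: sum_subtractf sum_distrib_left sum_divide_distrib algebra_simps)
    have O: "(\<Sum>j\<in>Os p. N * y j) = N * (\<Sum>j\<in>Os p. y j)" by (simp add: sum_distrib_left)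
    have tp: "t p = m p + d p" unfolding t_def ..
    have gdef: "g = s - \<Delta> + N" by (rule g_def)
    have sY': "s - t i = N * (y p + (\<Sum>j\<in>Os p. y j) + (\<Sum>j\<in>nbs n E p. y j))"
      using sY split[OF p] by simp
    show ?thesis unfolding R unfolding slack_def C O w_def
      by (rule ident_alg[OF dp sY' te[of p] tp gdef])
  qed
  have ddef: "d p = real (deg n E p)" for p unfolding d_def by simp
  have slack_terms: "(\<Delta> - d p) * y p \<ge> 0 \<and> - e p \<ge> 0 \<and> (\<Sum>j\<in>Os p. N * y j) \<ge> 0
      \<and> (\<Sum>j\<in>nbs n E p. (N - d j / d p) * y j) \<ge> 0" if p: "p < n" for p
  proof (intro conjI)
    show "(\<Delta> - d p) * y p \<ge> 0" using Dge[OF p] ynn[of p] by simp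
    show "- e p \<ge> 0" using enp[OF p] by simp
    show "(\<Sum>j\<in>Os p. N * y j) \<ge> 0" using Npos ynn by (intro sum_nonneg) simp
    show "(\<Sum>j\<in>nbs n E p. (N - d j / d p) * y j) \<ge> 0"
    proof (rule sum_nonneg)
      fix j assume "j \<in> nbs n E p"
      hence "j < n" "E p j" unfolding nbs_def by auto
      hence "d j / d p \<le> N" using Nge[OF p] by simp
      thus "(N - d j / d p) * y j \<ge> 0" using ynn[of j] by simp
    qed
  qed
  have slack_nn: "slack p \<ge> 0" if p: "p < n" for p
    using slack_terms[OF p] unfolding slack_def by linarith
  have slack0: "slack p = 0 \<longleftrightarrow> ((\<Delta> - d p) * y p = 0 \<and> e p = 0 \<and> (\<forall>j\<in>Os p. y j = 0)
       \<and> (\<forall>j\<in>nbs n E p. (N - d j / d p) * y j = 0))" if p: "p < n" for p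
  proof -
    have finO: "finite (Os p)" unfolding Os_def by auto
    have T: "slack p = 0 \<longleftrightarrow> ((\<Delta> - d p) * y p = 0 \<and> e p = 0 \<and> (\<Sum>j\<in>Os p. N * y j) = 0
      \<and> (\<Sum>j\<in>nbs n E p. (N - d j / d p) * y j) = 0)"
      using slack_terms[OF p] unfolding slack_def by (intro iffI; elim conjE; (intro conjI)?; linarith)
    have T3: "(\<Sum>j\<in>Os p. N * y j) = 0 \<longleftrightarrow> (\<forall>j\<in>Os p. y j = 0)"
      using finO Npos ynn by (subst sum_nonneg_eq_0_iff) auto
    have T4: "(\<Sum>j\<in>nbs n E p. (N - d j / d p) * y j) = 0 \<longleftrightarrow> (\<forall>j\<in>nbs n E p. (N - d j / d p) * y j = 0)"
    proof (rule sum_nonneg_eq_0_iff)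
      show "finite (nbs n E p)" by simp
      fix j assume "j \<in> nbs n E p"
      hence "j < n" "E p j" unfolding nbs_def by auto
      hence "d j / d p \<le> N" using Nge[OF p] by simp
      thus "(N - d j / d p) * y j \<ge> 0" using ynn[of j] by simp
    qed
    show ?thesis using T T3 T4 by simp
  qed
  have row_le: "real (deg n E p) * w p + (\<Sum>j\<in>nbs n E p. w j) \<le> s * w p" if p: "p < n" for p
    using ident[OF p] slack_nn[OF p] dpos[OF p] unfolding ddef
    by (metis diff_ge_0_iff_ge zero_le_mult_iff less_le)
  obtain lam where lam: "eigenvalue (map_mat complex_of_real (signless_laplacian n E)) lam"
      "rho_Q n E = cmod lam" using rho_eig[OF n0] by blast
  note EB = eig_bound[OF sg cg wpos row_le lam(1)]
  have rho_le: "rho_Q n E \<le> s" using EB lam(2) by simp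
  have rho_iff: "rho_Q n E = s \<longleftrightarrow> (\<forall>p<n. slack p = 0)"
  proof
    assume "rho_Q n E = s"
    hence tight: "\<forall>p<n. real (deg n E p) * w p + (\<Sum>j\<in>nbs n E p. w j) = s * w p" using EB lam(2) by simp
    show "\<forall>p<n. slack p = 0"
    proof (intro allI impI)
      fix p assume p: "p < n"
      have "d p * slack p = 0" using ident[OF p] tight p unfolding ddef by simp
      thus "slack p = 0" using dpos[OF p] by simp
    qed
  next
    assume sl: "\<forall>p<n. slack p = 0"
    have "real (deg n E p) * w p + (\<Sum>j\<in>nbs n E p. w j) = s * w p" if p: "p < n" for p
      using ident[OF p] sl p unfolding ddef by simp
    hence "s \<le> rho_Q n E" by (intro eig_exists[OF sg n0 wpos]) auto
    thus "rho_Q n E = s" using rho_le by simp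
  qed
  have comb: "(\<forall>p<n. slack p = 0) \<longleftrightarrow> ((\<forall>k<n. t k = t 0)
           \<or> (i \<ge> 1 \<and> bidegreed n E \<and> t 0 > t 1
              \<and> (\<forall>k. 1 \<le> k \<and> k < n \<longrightarrow> t k = t 1)
              \<and> d 0 = real n - 1 \<and> d 0 > d 1 \<and> (\<forall>k. 1 \<le> k \<and> k < n \<longrightarrow> d k = d 1)))"
  proof
    assume sl: "\<forall>p<n. slack p = 0"
    have z1: "(\<Delta> - d p) * y p = 0" and z2: "e p = 0" and z3: "\<forall>j\<in>Os p. y j = 0"
      and z4: "\<forall>j\<in>nbs n E p. (N - d j / d p) * y j = 0" if p: "p < n" for p
      using slack0[OF p] sl p by auto
    have adj: "E p j" if "p < n" "j < n" "p \<noteq> j" "y j \<noteq> 0" for p j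
      using z3[OF that(1)] that unfolding Os_def by auto
    have adjN: "N = d j / d p" if "p < n" "j < n" "p \<noteq> j" "y j \<noteq> 0" for p j
    proof -
      have "j \<in> nbs n E p" using adj[OF that] that unfolding nbs_def by auto
      hence "(N - d j / d p) * y j = 0" using z4[OF that(1)] by blast
      thus ?thesis using that(4) by simp
    qed
    have yt: "y k = 0 \<Longrightarrow> k < i \<Longrightarrow> t k = t i" for k unfolding y_def using gpos by simp
    show "(\<forall>k<n. t k = t 0) \<or> (i \<ge> 1 \<and> bidegreed n E \<and> t 0 > t 1
              \<and> (\<forall>k. 1 \<le> k \<and> k < n \<longrightarrow> t k = t 1)
              \<and> d 0 = real n - 1 \<and> d 0 > d 1 \<and> (\<forall>k. 1 \<le> k \<and> k < n \<longrightarrow> d k = d 1))"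
    proof (cases "y 0 = 0")
      case True
      have t0i: "t 0 = t i"
      proof (cases "i = 0")
        case False thus ?thesis using yt[OF True] by simp
      qed simp
      have "\<forall>k<n. t k = t 0"
      proof (intro allI impI)
        fix k assume k: "k < n"
        show "t k = t 0"
        proof (cases "k < i")
          case True
          thus ?thesis using tki[OF True] tord[of 0 k] k t0i by simp
        next
          case False
          thus ?thesis using z2[OF k] t0i unfolding e_def by simp
        qed
      qed
      thus ?thesis ..
    next
      case False
      hence y0: "y 0 > 0" using ynn[of 0] by simp
      hence i0: "0 < i" unfolding y_def by (cases "0 < i") auto
      hence t0gt: "t 0 > t i" using y0 gpos unfolding y_def by (simp add: zero_less_divide_iff)
      have notreg: "\<not> N \<le> 1"
      proof
        assume "N \<le> 1"
        hence "t i = t 0" using regular[rule_format, of i] iln by blast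
        thus False using t0gt by simp
      qed
      have n1: "1 < n" using n2 by simp
      have yq: "y q = 0" if q: "1 \<le> q" "q < n" for q
      proof (rule ccontr)
        assume yq: "y q \<noteq> 0"
        have a1: "N = d q / d 0" using adjN[OF n0 q(2) _ yq] q by simp
        have a2: "N = d 0 / d q" using adjN[OF q(2) n0 _ False] q by simp
        have eqd: "d q / d 0 = d 0 / d q" using a1 a2 by linarith
        hence "d q * d q = d 0 * d 0" using dpos[OF n0] dpos[OF q(2)] by (simp add: field_simps)
        hence "(d q)\<^sup>2 = (d 0)\<^sup>2" by (simp add: power2_eq_square)
        hence "d q = d 0" using dpos[OF n0] dpos[OF q(2)] by (simp add: power2_eq_iff_nonneg)
        hence "N = 1" using a1 dpos[OF n0] by simp
        thus False using notreg by simp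
      qed
      have Ep0: "E p 0" if p: "1 \<le> p" "p < n" for p using adj[OF p(2) n0 _ False] p by simp
      have Np: "N = d 0 / d p" if p: "1 \<le> p" "p < n" for p using adjN[OF p(2) n0 _ False] p by simp
      have tp: "t p = t i" if p: "1 \<le> p" "p < n" for p
      proof (cases "p < i")
        case True thus ?thesis using yt[of p] yq[OF p] by simp
      next
        case False thus ?thesis using z2[OF p(2)] unfolding e_def by simp
      qed
      have d0D: "d 0 = \<Delta>" using z1[OF n0] False by simp
      have dp: "d p = d 1" if p: "1 \<le> p" "p < n" for p
      proof -
        have N1: "N = d 0 / d 1" using Np[of 1] n1 by simp
        have "d 0 / d p = d 0 / d 1" using Np[OF p] N1 by linarith
        thus ?thesis using dpos[OF n0] dpos[OF p(2)] dpos[OF n1] by (simp add: field_simps)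
      qed
      have d01: "d 0 > d 1"
      proof -
        have "N > 1" using notreg by simp
        hence "d 0 / d 1 > 1" using Np[of 1] n1 by simp
        thus ?thesis using dpos[OF n1] by (simp add: less_divide_eq)
      qed
      have nbs0: "nbs n E 0 = {0..<n} - {0}"
      proof
        show "nbs n E 0 \<subseteq> {0..<n} - {0}" by (rule nbs_sub[OF sg])
        show "{0..<n} - {0} \<subseteq> nbs n E 0"
        proof
          fix p assume "p \<in> {0..<n} - {0}"
          hence p: "1 \<le> p" "p < n" by auto
          hence "E 0 p" using Ep0[OF p] sg unfolding simple_graph_def by blast
          thus "p \<in> nbs n E 0" using p unfolding nbs_def by simp
        qed
      qed
      have d0n: "d 0 = real n - 1"
      proof -
        have "deg n E 0 = n - 1" unfolding deg_nbs nbs0 using n0 by simp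
        thus ?thesis unfolding ddef using n0 by (simp add: of_nat_diff)
      qed
      have degk: "deg n E k = deg n E 1" if "1 \<le> k" "k < n" for k using dp[OF that] unfolding ddef by simp
      have "deg n E ` {0..<n} = {deg n E 0, deg n E 1}"
      proof
        show "deg n E ` {0..<n} \<subseteq> {deg n E 0, deg n E 1}"
        proof
          fix x assume "x \<in> deg n E ` {0..<n}"
          then obtain k where k: "k < n" "x = deg n E k" by auto
          show "x \<in> {deg n E 0, deg n E 1}"
          proof (cases "k = 0")
            case False thus ?thesis using degk[of k] k by simp
          qed (use k in simp)
        qed
        show "{deg n E 0, deg n E 1} \<subseteq> deg n E ` {0..<n}" using n1 by auto
      qed
      moreover have "deg n E 0 \<noteq> deg n E 1" using d01 unfolding ddef by simp
      ultimately have bd: "bidegreed n E" unfolding bidegreed_def by simp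
      have t1: "t 1 = t i" using tp[of 1] n1 by simp
      have "i \<ge> 1 \<and> bidegreed n E \<and> t 0 > t 1
              \<and> (\<forall>k. 1 \<le> k \<and> k < n \<longrightarrow> t k = t 1)
              \<and> d 0 = real n - 1 \<and> d 0 > d 1 \<and> (\<forall>k. 1 \<le> k \<and> k < n \<longrightarrow> d k = d 1)"
      proof (intro conjI allI impI)
        fix k assume "1 \<le> k \<and> k < n"
        thus "t k = t 1" using tp[of k] t1 by simp
      next
        fix k assume "1 \<le> k \<and> k < n"
        thus "d k = d 1" using dp[of k] by simp
      qed (use i0 bd t0gt t1 d0n d01 in simp_all)
      thus ?thesis ..
    qed
  next
    assume C: "(\<forall>k<n. t k = t 0) \<or> (i \<ge> 1 \<and> bidegreed n E \<and> t 0 > t 1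
              \<and> (\<forall>k. 1 \<le> k \<and> k < n \<longrightarrow> t k = t 1)
              \<and> d 0 = real n - 1 \<and> d 0 > d 1 \<and> (\<forall>k. 1 \<le> k \<and> k < n \<longrightarrow> d k = d 1))"
    show "\<forall>p<n. slack p = 0"
    proof (cases "\<forall>k<n. t k = t 0")
      case True
      note tall = True
      have tti: "t k = t i" if "k < n" for k using tall[rule_format, of k] tall[rule_format, of i] that iln by simp
      have y0: "y k = 0" for k unfolding y_def using tti[of k] iln by auto
      have e0: "e k = 0" if "k < n" for k unfolding e_def using tti[of k] that by auto
      show ?thesis unfolding slack_def using y0 e0 by simp
    next
      case False
      with C have i1: "i \<ge> 1" and t01: "t 0 > t 1" and tk: "\<forall>k. 1 \<le> k \<and> k < n \<longrightarrow> t k = t 1"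
        and d0n: "d 0 = real n - 1" and d01: "d 0 > d 1" and dk: "\<forall>k. 1 \<le> k \<and> k < n \<longrightarrow> d k = d 1"
        by blast+
      have n1: "1 < n" using n2 by simp
      have ti1: "t i = t 1" using tk[rule_format, of i] i1 iln by blast
      have yk: "y k = 0" if "k \<noteq> 0" for k unfolding y_def using tk[rule_format, of k] ti1 that iln by auto
      have ek: "e k = 0" if "k < n" for k unfolding e_def using tk[rule_format, of k] ti1 that i1 by auto
      have D0: "\<Delta> = d 0" using v dle[OF v(1)] Dge[OF n0] d0n by simp
      have nbs0: "nbs n E 0 = {0..<n} - {0}"
      proof (rule card_subset_eq)
        show "finite ({0..<n} - {0::nat})" by simp
        show "nbs n E 0 \<subseteq> {0..<n} - {0}" by (rule nbs_sub[OF sg])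
        have "real (card (nbs n E 0)) = real n - 1" using d0n unfolding ddef deg_nbs .
        hence "card (nbs n E 0) = n - 1" using n0 by linarith
        thus "card (nbs n E 0) = card ({0..<n} - {0})" using n0 by simp
      qed
      have Ep0: "E p 0" if "1 \<le> p" "p < n" for p
      proof -
        have "p \<in> nbs n E 0" unfolding nbs0 using that by simp
        thus ?thesis using sg unfolding nbs_def simple_graph_def by blast
      qed
      have Nval: "N = d 0 / d 1"
      proof (rule antisym)
        have "d pb \<le> d 0" using Dge[OF pab(2)] D0 by simp
        moreover have "d 1 \<le> d pa" using dk[rule_format, of pa] pab(1) d01 by (cases "pa = 0") auto
        ultimately show "N \<le> d 0 / d 1" unfolding pab(4)
          using dpos[OF pab(2)] dpos[OF n1] by (intro frac_le) auto
        show "d 0 / d 1 \<le> N" using Nge[OF n1 n0 Ep0[of 1]] n1 by simp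
      qed
      show ?thesis
      proof (intro allI impI)
        fix p assume p: "p < n"
        have nE: "\<not> E p p" using sg unfolding simple_graph_def by auto
        have "(\<Delta> - d p) * y p = 0" using D0 yk[of p] by (cases "p = 0") auto
        moreover have "e p = 0" by (rule ek[OF p])
        moreover have "\<forall>j\<in>Os p. y j = 0"
        proof
          fix j assume j: "j \<in> Os p"
          show "y j = 0"
          proof (cases "j = 0")
            case True
            hence "1 \<le> p" using j unfolding Os_def by auto
            thus ?thesis using Ep0[OF _ p] j True unfolding Os_def by auto
          qed (rule yk)
        qed
        moreover have "\<forall>j\<in>nbs n E p. (N - d j / d p) * y j = 0"
        proof
          fix j assume j: "j \<in> nbs n E p"
          show "(N - d j / d p) * y j = 0"
          proof (cases "j = 0")
            case True
            hence "p \<noteq> 0" using j nE unfolding nbs_def by (cases "p = 0") auto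
            hence "d p = d 1" using dk[rule_format, of p] p by simp
            thus ?thesis using Nval True by simp
          qed (simp add: yk)
        qed
        ultimately show "slack p = 0" using slack0[OF p] by blast
      qed
    qed
  qed
  have "rho_Q n E \<le> s \<and> (rho_Q n E = s \<longleftrightarrow> ((\<forall>k<n. t k = t 0)
           \<or> (i \<ge> 1 \<and> bidegreed n E \<and> t 0 > t 1
              \<and> (\<forall>k. 1 \<le> k \<and> k < n \<longrightarrow> t k = t 1)
              \<and> d 0 = real n - 1 \<and> d 0 > d 1 \<and> (\<forall>k. 1 \<le> k \<and> k < n \<longrightarrow> d k = d 1))))"
    using rho_le rho_iff comb by blast
  thus ?thesis unfolding s_def S_def t_def .
qed

end
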